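(* Let $c:S^1\to\mathbb{C}$ be a $\mathcal{C}^1$-embedding with image $\Gamma$, and let $F:V\to\mathrm{Tri}$ be the map $F(s_0,s_1,s_2)=[(c(s_0),c(s_1),c(s_2))]$. A point $(s_0,s_1,s_2)\in V$ is a critical point of $F$ (i.e. the tangent map of $F$ at that point is not surjective) if and only if the three tangent lines to $\Gamma$ at $c(s_0),c(s_1),c(s_2)$ are either all parallel or concurrent (all pass through a common point).
   Context: Identify the plane with $\mathbb{C}$. $\mathrm{Tri}$ is the smooth 3-manifold $\big(\mathbb{C}^2\setminus\{(0,0)\}\big)/\mathbb{R}_{>0}$, where a triple $(z_0,z_1,z_2)\in\mathbb{C}^3$ not of the form $(z,z,z)$ is sent to the class $[(z_0,z_1,z_2)]$ of $(z_1-z_0,z_2-z_0)$ under scalar multiplication by positive reals; thus $\mathrm{Tri}$ is the space of triangles modulo translations and positive homotheties. $V=(S^1)^3\setminus\{(s,s,s):s\in S^1\}$. A $\mathcal{C}^1$-embedding is an injective $\mathcal{C}^1$-immersion. The tangent line to $\Gamma$ at $c(s)$ is $c(s)+\mathbb{R}\,\dot c(s)$. *)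

theory Defs
  imports "HOL-Analysis.Analysis"
begin

text \<open>S^1 is modelled as R/Z: a map c : S^1 -> C is a 1-periodic map real => complex.
  A C^1-embedding is a 1-periodic C^1 map with nowhere vanishing derivative
  (immersion) that is injective on R/Z.\<close>

definition C1_embedding_S1 :: "(real \<Rightarrow> complex) \<Rightarrow> bool" where
  "C1_embedding_S1 c \<longleftrightarrow>
     (\<forall>t. c (t + 1) = c t) \<and>
     c C1_differentiable_on UNIV \<and>
     (\<forall>t. vector_derivative c (at t) \<noteq> 0) \<and>
     (\<forall>s t. c s = c t \<longrightarrow> s - t \<in> \<int>)"

text \<open>V = (S^1)^3 minus the diagonal, lifted to R^3.\<close>
definition in_V :: "real \<Rightarrow> real \<Rightarrow> real \<Rightarrow> bool" where
  "in_V s0 s1 s2 \<longleftrightarrow> \<not> (s1 - s0 \<in> \<int> \<and> s2 - s0 \<in> \<int>)"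

text \<open>Tri = (C^2 minus 0)/R_{>0}, realised (with its standard smooth structure) as the
  unit sphere S^3 in C^2 = R^4 via the diffeomorphism [w] |-> w/|w|.\<close>
definition tri_class :: "complex \<Rightarrow> complex \<Rightarrow> complex \<Rightarrow> complex \<times> complex" where
  "tri_class z0 z1 z2 = (let w = (z1 - z0, z2 - z0) in scaleR (1 / norm w) w)"

definition tri_F :: "(real \<Rightarrow> complex) \<Rightarrow> real \<times> real \<times> real \<Rightarrow> complex \<times> complex" where
  "tri_F c = (\<lambda>(s0, s1, s2). tri_class (c s0) (c s1) (c s2))"

text \<open>Tangent space of the sphere model of Tri at a point x: the orthogonal complement of x.
  A point is critical iff the tangent map of F there is not onto that tangent space.\<close>
definition tri_critical :: "(real \<Rightarrow> complex) \<Rightarrow> real \<times> real \<times> real \<Rightarrow> bool" where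
  "tri_critical c p \<longleftrightarrow>
     range (frechet_derivative (tri_F c) (at p)) \<noteq> {v. inner v (tri_F c p) = 0}"

definition tangent_line :: "(real \<Rightarrow> complex) \<Rightarrow> real \<Rightarrow> complex set" where
  "tangent_line c t = {c t + of_real r * vector_derivative c (at t) | r. True}"

definition tangent_lines_parallel :: "(real \<Rightarrow> complex) \<Rightarrow> real \<Rightarrow> real \<Rightarrow> real \<Rightarrow> bool" where
  "tangent_lines_parallel c s0 s1 s2 \<longleftrightarrow>
     (\<exists>d. d \<noteq> 0 \<and> (\<forall>t\<in>{s0, s1, s2}. \<exists>r::real. vector_derivative c (at t) = of_real r * d))"

definition tangent_lines_concurrent :: "(real \<Rightarrow> complex) \<Rightarrow> real \<Rightarrow> real \<Rightarrow> real \<Rightarrow> bool" where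
  "tangent_lines_concurrent c s0 s1 s2 \<longleftrightarrow>
     (\<exists>p. p \<in> tangent_line c s0 \<and> p \<in> tangent_line c s1 \<and> p \<in> tangent_line c s2)"

end

theory Submission imports Defs begin

lemma N_deriv:
  fixes w :: "'a::real_inner"
  assumes "w \<noteq> 0"
  shows "((\<lambda>v. (1/norm v) *\<^sub>R v) has_derivative
          (\<lambda>k. (1/norm w) *\<^sub>R k - ((inner w k)/(norm w)^3) *\<^sub>R w)) (at w)"
proof -
  have n: "(norm has_derivative (\<lambda>k. inner (sgn w) k)) (at w)"
    using has_derivative_norm[OF assms] by (simp add: inner_commute)
  have i: "((\<lambda>v. inverse (norm v)) has_derivative
        (\<lambda>k. - (inverse (norm w) * inner (sgn w) k * inverse (norm w)))) (at w)"
    using Deriv.has_derivative_inverse[OF _ n] assms by simp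
  have "((\<lambda>v. inverse (norm v) *\<^sub>R v) has_derivative
        (\<lambda>k. inverse (norm w) *\<^sub>R k + (- (inverse (norm w) * inner (sgn w) k * inverse (norm w))) *\<^sub>R w)) (at w)"
    using has_derivative_scaleR[OF i has_derivative_ident] by simp
  moreover have "(\<lambda>k. inverse (norm w) *\<^sub>R k + (- (inverse (norm w) * inner (sgn w) k * inverse (norm w))) *\<^sub>R w)
     = (\<lambda>k. (1/norm w) *\<^sub>R k - ((inner w k)/(norm w)^3) *\<^sub>R w)"
    by (auto simp: sgn_div_norm field_simps power3_eq_cube inner_commute)
  ultimately show ?thesis by (simp add: divide_inverse)
qed

lemma key_dim:
  fixes D :: "real \<times> real \<times> real \<Rightarrow> complex \<times> complex"
  assumes lin: "linear D" and a: "a \<noteq> 0" and sub: "range D \<subseteq> {v. inner v a = 0}"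
  shows "range D = {v. inner v a = 0} \<longleftrightarrow> (\<forall>h. D h = 0 \<longrightarrow> h = 0)"
proof -
  have H: "{v. inner v a = 0} = {v. inner a v = 0}" by (auto simp: inner_commute)
  have dH: "dim {v. inner v a = 0} = 3" unfolding H using dim_hyperplane[OF a] by simp
  show ?thesis
  proof
    assume eq: "range D = {v. inner v a = 0}"
    show "\<forall>h. D h = 0 \<longrightarrow> h = 0"
    proof (rule ccontr)
      assume "\<not> ?thesis"
      then obtain h0 where h0: "D h0 = 0" "h0 \<noteq> 0" by auto
      let ?K = "{x. inner h0 x = 0}"
      have dK: "dim ?K = 2" using dim_hyperplane[OF h0(2)] by simp
      have "range D \<subseteq> D ` ?K"
      proof
        fix y assume "y \<in> range D"
        then obtain x where x: "y = D x" by auto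
        let ?xk = "x - (inner h0 x / inner h0 h0) *\<^sub>R h0"
        have "?xk \<in> ?K" using h0(2) by (simp add: inner_diff_right)
        moreover have "D ?xk = D x" using h0(1) by (simp add: linear_diff[OF lin] linear_scale[OF lin])
        ultimately show "y \<in> D ` ?K" using x by (metis image_eqI)
      qed
      then have "range D = D ` ?K" by auto
      then have "dim (range D) \<le> 2" using dim_image_le[OF lin, of ?K] dK by simp
      then show False using eq dH by simp
    qed
  next
    assume k: "\<forall>h. D h = 0 \<longrightarrow> h = 0"
    have inj: "inj D"
    proof (rule injI)
      fix x y assume "D x = D y"
      then have "D (x - y) = 0" by (simp add: linear_diff[OF lin])
      then show "x = y" using k[rule_format, of "x - y"] by simp
    qed
    have "dim (range D) = dim (UNIV :: (real \<times> real \<times> real) set)"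
      using dim_image_eq[OF lin, of UNIV] inj by simp
    then have "dim (range D) = 3" by simp
    show "range D = {v. inner v a = 0}"
      apply (rule subspace_dim_equal)
      using sub \<open>dim (range D) = 3\<close> dH
      by (auto simp: H subspace_hyperplane intro!: linear_subspace_image[OF lin] subspace_UNIV)
  qed
qed
lemma geom:
  fixes z0 z1 z2 d0 d1 d2 :: complex
  assumes w: "(z1 - z0, z2 - z0) \<noteq> 0" and nz: "d0 \<noteq> 0" "d1 \<noteq> 0" "d2 \<noteq> 0"
  shows "(\<exists>a0 a1 a2 l. (a0, a1, a2) \<noteq> (0::real\<times>real\<times>real) \<and>
            of_real a1 * d1 - of_real a0 * d0 = of_real l * (z1 - z0) \<and>
            of_real a2 * d2 - of_real a0 * d0 = of_real l * (z2 - z0))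
     \<longleftrightarrow> (\<exists>d. d \<noteq> 0 \<and> (\<exists>r::real. d0 = of_real r * d) \<and> (\<exists>r::real. d1 = of_real r * d)
                  \<and> (\<exists>r::real. d2 = of_real r * d))
       \<or> (\<exists>p. (\<exists>r::real. p = z0 + of_real r * d0) \<and> (\<exists>r::real. p = z1 + of_real r * d1)
              \<and> (\<exists>r::real. p = z2 + of_real r * d2))"
  (is "?L \<longleftrightarrow> ?P \<or> ?C")
proof
  assume ?L
  then obtain a0 a1 a2 l where h: "(a0, a1, a2) \<noteq> (0::real\<times>real\<times>real)"
    and e1: "of_real a1 * d1 - of_real a0 * d0 = of_real l * (z1 - z0)"
    and e2: "of_real a2 * d2 - of_real a0 * d0 = of_real l * (z2 - z0)" by blast
  show "?P \<or> ?C"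
  proof (cases "l = 0")
    case True
    then have e1': "of_real a1 * d1 = of_real a0 * d0" and e2': "of_real a2 * d2 = of_real a0 * d0"
      using e1 e2 by auto
    have a0: "a0 \<noteq> 0"
    proof
      assume "a0 = 0"
      then have "a1 = 0" "a2 = 0" using e1' e2' nz by auto
      with \<open>a0 = 0\<close> h show False by (simp add: zero_prod_def)
    qed
    have a1: "a1 \<noteq> 0" using e1' a0 nz by auto
    have a2: "a2 \<noteq> 0" using e2' a0 nz by auto
    have "d1 = of_real (a0/a1) * d0" using e1' a1 by (simp add: field_simps)
    moreover have "d2 = of_real (a0/a2) * d0" using e2' a2 by (simp add: field_simps)
    moreover have "d0 = of_real 1 * d0" by simp
    ultimately have ?P using nz by blast
    then show ?thesis ..
  next
    case False
    define p where "p = z0 + of_real (- a0 / l) * d0"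
    have "p = z1 + of_real (- a1 / l) * d1" using e1 False unfolding p_def
      by (simp add: field_simps)
    moreover have "p = z2 + of_real (- a2 / l) * d2" using e2 False unfolding p_def
      by (simp add: field_simps)
    ultimately have ?C unfolding p_def by blast
    then show ?thesis ..
  qed
next
  assume "?P \<or> ?C"
  then show ?L
  proof
    assume ?P
    then obtain d r0 r1 r2 where d: "d \<noteq> 0" and r: "d0 = of_real r0 * d" "d1 = of_real r1 * d"
      "d2 = of_real r2 * d" by blast
    have rnz: "r0 \<noteq> 0" "r1 \<noteq> 0" "r2 \<noteq> 0" using r nz by auto
    have "(1/r0, 1/r1, 1/r2) \<noteq> (0::real\<times>real\<times>real)" using rnz by (simp add: zero_prod_def)
    moreover have "of_real (1/r1) * d1 - of_real (1/r0) * d0 = of_real 0 * (z1 - z0)"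
      using r rnz by simp
    moreover have "of_real (1/r2) * d2 - of_real (1/r0) * d0 = of_real 0 * (z2 - z0)"
      using r rnz by simp
    ultimately show ?L by blast
  next
    assume ?C
    then obtain p r0 r1 r2 where r: "p = z0 + of_real r0 * d0" "p = z1 + of_real r1 * d1"
      "p = z2 + of_real r2 * d2" by blast
    have q1: "of_real (-r1) * d1 - of_real (-r0) * d0 = of_real 1 * (z1 - z0)"
      using r by (simp add: algebra_simps)
    have q2: "of_real (-r2) * d2 - of_real (-r0) * d0 = of_real 1 * (z2 - z0)"
      using r by (simp add: algebra_simps)
    have "(-r0, -r1, -r2) \<noteq> (0::real\<times>real\<times>real)"
    proof
      assume "(-r0, -r1, -r2) = (0::real\<times>real\<times>real)"
      then have "r0 = 0" "r1 = 0" "r2 = 0" by (auto simp: zero_prod_def)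
      with q1 q2 w show False by (simp add: zero_prod_def)
    qed
    with q1 q2 show ?L by blast
  qed
qed

theorem proposition2p1:
  fixes c :: "real \<Rightarrow> complex" and s0 s1 s2 :: real
  assumes "C1_embedding_S1 c"
    and "in_V s0 s1 s2"
  shows "tri_critical c (s0, s1, s2) \<longleftrightarrow>
         tangent_lines_parallel c s0 s1 s2 \<or> tangent_lines_concurrent c s0 s1 s2"
proof -
  define d where "d t = vector_derivative c (at t)" for t
  define p where "p = (s0, s1, s2)"
  have emb: "c C1_differentiable_on UNIV" "\<And>t. d t \<noteq> 0" "\<And>s t. c s = c t \<Longrightarrow> s - t \<in> \<int>"
    using assms(1) unfolding C1_embedding_S1_def d_def by auto
  have dc: "(c has_derivative (\<lambda>h. h *\<^sub>R d t)) (at t)" for t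
    using emb(1) unfolding C1_differentiable_on_eq d_def
    by (metis UNIV_I has_vector_derivative_def vector_derivative_works)
  have dcomp: "((\<lambda>x. c (f x)) has_derivative (\<lambda>h. f' h *\<^sub>R d (f p))) (at p)"
    if "(f has_derivative f') (at p)" for f :: "real \<times> real \<times> real \<Rightarrow> real" and f'
    using has_derivative_compose[OF that dc] .
  define G where "G x = (c (fst (snd x)) - c (fst x), c (snd (snd x)) - c (fst x))" for x :: "real\<times>real\<times>real"
  define L where "L h = (fst (snd h) *\<^sub>R d s1 - fst h *\<^sub>R d s0, snd (snd h) *\<^sub>R d s2 - fst h *\<^sub>R d s0)"
    for h :: "real\<times>real\<times>real"
  define w where "w = G p"
  have w_eq: "w = (c s1 - c s0, c s2 - c s0)" by (simp add: w_def G_def p_def)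
  have wnz: "w \<noteq> 0"
  proof
    assume "w = 0"
    then have "c s1 = c s0" "c s2 = c s0" by (auto simp: w_eq zero_prod_def)
    then show False using emb(3) assms(2) unfolding in_V_def by blast
  qed
  define n where "n = norm w"
  have npos: "n > 0" using wnz by (simp add: n_def)
  have dG: "(G has_derivative L) (at p)"
    unfolding G_def L_def
    apply (intro has_derivative_Pair has_derivative_diff)
    using dcomp[OF has_derivative_fst[OF has_derivative_snd[OF has_derivative_ident]]]
      dcomp[OF has_derivative_snd[OF has_derivative_snd[OF has_derivative_ident]]]
      dcomp[OF has_derivative_fst[OF has_derivative_ident]]
    by (simp_all add: p_def)
  define D where "D h = (1/n) *\<^sub>R L h - ((inner w (L h))/n^3) *\<^sub>R w" for h
  have Fe: "tri_F c = (\<lambda>x. (\<lambda>v. (1/norm v) *\<^sub>R v) (G x))"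
    by (auto simp: tri_F_def tri_class_def G_def Let_def)
  have dF: "(tri_F c has_derivative D) (at p)"
    unfolding Fe D_def n_def using has_derivative_compose[OF dG N_deriv[OF wnz[unfolded w_def]]]
    by (simp add: w_def)
  have fd: "frechet_derivative (tri_F c) (at p) = D"
    using frechet_derivative_at[OF dF] by simp
  have lin: "linear D" using has_derivative_bounded_linear[OF dF] bounded_linear.linear by blast
  have Fp: "tri_F c p = (1/n) *\<^sub>R w"
    by (simp add: Fe w_def n_def)
  have anz: "tri_F c p \<noteq> 0" using Fp wnz npos by simp
  have nn: "inner w w = n^2" by (simp add: n_def power2_norm_eq_inner)
  have sub: "range D \<subseteq> {v. inner v (tri_F c p) = 0}"
  proof
    fix y assume "y \<in> range D"
    then obtain h where y: "y = D h" by auto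
    have "inner (D h) w = inner (L h) w / n - inner w (L h) / n^3 * n^2"
      by (simp add: D_def inner_diff_left nn)
    also have "\<dots> = 0" using npos by (simp add: inner_commute power3_eq_cube power2_eq_square field_simps)
    finally show "y \<in> {v. inner v (tri_F c p) = 0}" by (simp add: y Fp)
  qed
  have Dz: "D h = 0 \<longleftrightarrow> (\<exists>l. L h = l *\<^sub>R w)" for h
  proof
    assume "D h = 0"
    then have "(1/n) *\<^sub>R L h = ((inner w (L h))/n^3) *\<^sub>R w" by (simp add: D_def)
    then have "n *\<^sub>R ((1/n) *\<^sub>R L h) = n *\<^sub>R (((inner w (L h))/n^3) *\<^sub>R w)" by simp
    then have "L h = (inner w (L h)/n^2) *\<^sub>R w" using npos
      by (simp add: power3_eq_cube power2_eq_square)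
    then show "\<exists>l. L h = l *\<^sub>R w" by blast
  next
    assume "\<exists>l. L h = l *\<^sub>R w"
    then obtain l where l: "L h = l *\<^sub>R w" by blast
    have "inner w (L h) = l * n^2" by (simp add: l nn)
    then show "D h = 0" using npos
      by (simp add: D_def l nn power3_eq_cube power2_eq_square)
  qed
  have crit: "tri_critical c (s0, s1, s2) \<longleftrightarrow> (\<exists>h. h \<noteq> 0 \<and> (\<exists>l. L h = l *\<^sub>R w))"
    using key_dim[OF lin anz sub] Dz unfolding tri_critical_def fd p_def[symmetric] by blast
  have "(\<exists>h. h \<noteq> 0 \<and> (\<exists>l. L h = l *\<^sub>R w)) \<longleftrightarrow>
        (\<exists>a0 a1 a2 l. (a0, a1, a2) \<noteq> (0::real\<times>real\<times>real) \<and>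
            of_real a1 * d s1 - of_real a0 * d s0 = of_real l * (c s1 - c s0) \<and>
            of_real a2 * d s2 - of_real a0 * d s0 = of_real l * (c s2 - c s0))"
    by (auto simp: L_def w_eq scaleR_conv_of_real)
  also have "\<dots> \<longleftrightarrow> tangent_lines_parallel c s0 s1 s2 \<or> tangent_lines_concurrent c s0 s1 s2"
    unfolding geom[OF wnz[unfolded w_eq] emb(2) emb(2) emb(2)]
    unfolding tangent_lines_parallel_def tangent_lines_concurrent_def tangent_line_def d_def
    by auto
  finally show ?thesis using crit by simp
qed

end
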